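(* Let $K$ be an $\mathcal R$-dioid, $m\ge 2$, and $e:=\sum_{i<m}q_ip_i\in C_m'$. Let $\phi(x)$ be an expression built with $+$, $\cdot$, ${}^*$ from elements of $K$, the element $\pi=q_0p_0$, the brackets $p_1,\ldots,p_{m-1},q_1,\ldots,q_{m-1}$ and a variable $x$ (so $p_0$ and $q_0$ occur only inside $\pi$), and for $c\in K\otimes_{\mathcal R}C_m'$ let $\phi(c)$ denote its value in $K\otimes_{\mathcal R}C_m'$ with $x:=c$. Then \[ p_0\,\phi(e)\,q_0=p_0\,\phi(1)\,q_0 \quad\text{and}\quad p_0\,\phi(1)\,q_0\in Z_{C_m'}K. \]
   Context: An $\mathcal R$-dioid is a dioid in which every regular subset $A$ of its multiplicative monoid has a least upper bound $\sum A$ with $\sum(AB)=(\sum A)(\sum B)$; equivalently, a $*$-continuous Kleene algebra. An $\mathcal R$-congruence is a semiring congruence $\rho$ such that regular sets with equal downward closures modulo $\rho$ have congruent suprema. $\Delta_m=\{p_0,\dots,p_{m-1},q_0,\dots,q_{m-1}\}$; $C_m'=\mathcal R\Delta_m^*/\rho$ where $\mathcal R\Delta_m^*$ is the algebra of regular languages over $\Delta_m$ and $\rho$ is the least $\mathcal R$-congruence containing $p_iq_j=\delta_{i,j}$ for $i,j<m$. $K\otimes_{\mathcal R}C_m'$ is the tensor product of $\mathcal R$-dioids (universal $\mathcal R$-dioid receiving $\mathcal R$-morphisms from $K$ and $C_m'$ with elementwise commuting images); elements of $K$ and $C_m'$ are identified with their images. $Z_{C_m'}K$ is the set of elements of $K\otimes_{\mathcal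 R}C_m'$ commuting with every element of $C_m'$. *)

theory Defs
  imports Main
begin

text \<open>A dioid: idempotent semiring with 0 and 1 (0 = 1 is allowed).\<close>
class dioid = semiring_0 + monoid_mult +
  assumes add_idem: "x + x = x"

definition setmul :: "('a \<Rightarrow> 'a \<Rightarrow> 'a) \<Rightarrow> 'a set \<Rightarrow> 'a set \<Rightarrow> 'a set" where
  "setmul mul A B = {mul a b | a b. a \<in> A \<and> b \<in> B}"

definition mstar :: "('a \<Rightarrow> 'a \<Rightarrow> 'a) \<Rightarrow> 'a \<Rightarrow> 'a set \<Rightarrow> 'a set" where
  "mstar mul one A = {foldr mul xs one | xs. set xs \<subseteq> A}"

inductive ratsub :: "('a \<Rightarrow> 'a \<Rightarrow> 'a) \<Rightarrow> 'a \<Rightarrow> 'a set \<Rightarrow> 'a set \<Rightarrow> bool"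
  for mul one S where
  fin: "finite A \<Longrightarrow> A \<subseteq> S \<Longrightarrow> ratsub mul one S A"
| un: "ratsub mul one S A \<Longrightarrow> ratsub mul one S B \<Longrightarrow> ratsub mul one S (A \<union> B)"
| prod: "ratsub mul one S A \<Longrightarrow> ratsub mul one S B \<Longrightarrow> ratsub mul one S (setmul mul A B)"
| star: "ratsub mul one S A \<Longrightarrow> ratsub mul one S (mstar mul one A)"

abbreviation regular :: "'a::dioid set \<Rightarrow> bool" where
  "regular A \<equiv> ratsub (*) 1 UNIV A"

definition dle :: "'a::dioid \<Rightarrow> 'a \<Rightarrow> bool" where
  "dle x y \<longleftrightarrow> x + y = y"

definition is_lubD :: "'a::dioid set \<Rightarrow> 'a \<Rightarrow> bool" where
  "is_lubD A s \<longleftrightarrow> (\<forall>a\<in>A. dle a s) \<and> (\<forall>u. (\<forall>a\<in>A. dle a u) \<longrightarrow> dle s u)"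

definition sumR :: "'a::dioid set \<Rightarrow> 'a" where
  "sumR A = (THE s. is_lubD A s)"

text \<open>R-dioid (class axioms written with dle/is_lubD/sumR unfolded, since
  global constants of sort dioid cannot be used inside the class specification).\<close>
class rdioid = dioid +
  assumes regular_lub: "ratsub (*) 1 UNIV (A :: 'a set) \<Longrightarrow>
     \<exists>s. (\<forall>a\<in>A. a + s = s) \<and> (\<forall>u. (\<forall>a\<in>A. a + u = u) \<longrightarrow> s + u = u)"
  and sumR_mult: "ratsub (*) 1 UNIV (A :: 'a set) \<Longrightarrow> ratsub (*) 1 UNIV B \<Longrightarrow>
     (THE s. (\<forall>a\<in>setmul (*) A B. a + s = s) \<and> (\<forall>u. (\<forall>a\<in>setmul (*) A B. a + u = u) \<longrightarrow> s + u = u))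
     = (THE s. (\<forall>a\<in>A. a + s = s) \<and> (\<forall>u. (\<forall>a\<in>A. a + u = u) \<longrightarrow> s + u = u))
     * (THE s. (\<forall>a\<in>B. a + s = s) \<and> (\<forall>u. (\<forall>a\<in>B. a + u = u) \<longrightarrow> s + u = u))"

lemma rdioid_sumR_mult: "regular (A::'a::rdioid set) \<Longrightarrow> regular B \<Longrightarrow>
  sumR (setmul (*) A B) = sumR A * sumR B"
  using sumR_mult[of A B] by (simp add: sumR_def is_lubD_def dle_def)

definition kstar :: "'a::dioid \<Rightarrow> 'a" where
  "kstar a = sumR (mstar (*) 1 {a})"

definition Rmor :: "('a::rdioid \<Rightarrow> 'b::rdioid) \<Rightarrow> bool" where
  "Rmor f \<longleftrightarrow> f 0 = 0 \<and> f 1 = 1 \<and> (\<forall>a b. f (a + b) = f a + f b) \<and>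
     (\<forall>a b. f (a * b) = f a * f b) \<and> (\<forall>A. regular A \<longrightarrow> f (sumR A) = sumR (f ` A))"

datatype letter = Lp nat | Lq nat

definition Delta :: "nat \<Rightarrow> letter set" where
  "Delta m = {Lp i | i. i < m} \<union> {Lq i | i. i < m}"

abbreviation lconc :: "letter list set \<Rightarrow> letter list set \<Rightarrow> letter list set" where
  "lconc L M \<equiv> setmul (@) L M"

inductive reglang :: "nat \<Rightarrow> letter list set \<Rightarrow> bool" for m where
  empty: "reglang m {}"
| eps: "reglang m {[]}"
| sing: "a \<in> Delta m \<Longrightarrow> reglang m {[a]}"
| un: "reglang m L \<Longrightarrow> reglang m M \<Longrightarrow> reglang m (L \<union> M)"
| conc: "reglang m L \<Longrightarrow> reglang m M \<Longrightarrow> reglang m (lconc L M)"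
| star: "reglang m L \<Longrightarrow> reglang m (mstar (@) [] L)"

abbreviation regular_lang :: "nat \<Rightarrow> letter list set set \<Rightarrow> bool" where
  "regular_lang m A \<equiv> ratsub lconc {[]} (Collect (reglang m)) A"

text \<open>R-congruence on R Delta_m^* (whose sum is union and order is inclusion).
  The downward closure of A modulo rho is represented by the set of representatives
  X with [X] \<le> [L] for some L in A, i.e. (X \<union> L, L) in rho.\<close>
definition rcong :: "nat \<Rightarrow> (letter list set \<times> letter list set) set \<Rightarrow> bool" where
  "rcong m \<rho> \<longleftrightarrow> equiv (Collect (reglang m)) \<rho> \<and>
     (\<forall>L L' M M'. (L, L') \<in> \<rho> \<longrightarrow> (M, M') \<in> \<rho> \<longrightarrow>
        (L \<union> M, L' \<union> M') \<in> \<rho> \<and> (lconc L M, lconc L' M') \<in> \<rho>) \<and>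
     (\<forall>A B. regular_lang m A \<longrightarrow> regular_lang m B \<longrightarrow>
        {X. reglang m X \<and> (\<exists>L\<in>A. (X \<union> L, L) \<in> \<rho>)} =
        {X. reglang m X \<and> (\<exists>L\<in>B. (X \<union> L, L) \<in> \<rho>)} \<longrightarrow>
        (\<Union>A, \<Union>B) \<in> \<rho>)"

definition bracket_rels :: "nat \<Rightarrow> (letter list set \<times> letter list set) set" where
  "bracket_rels m = {({[Lp i, Lq j]}, if i = j then {[]} else {}) | i j. i < m \<and> j < m}"

text \<open>rho: least R-congruence containing p_i q_j = delta_ij; C'_m = R Delta_m^* / rho.\<close>
definition rho :: "nat \<Rightarrow> (letter list set \<times> letter list set) set" where
  "rho m = \<Inter> {\<rho>. rcong m \<rho> \<and> bracket_rels m \<subseteq> \<rho>}"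

definition Rmor_lang :: "nat \<Rightarrow> (letter list set \<Rightarrow> 'b::rdioid) \<Rightarrow> bool" where
  "Rmor_lang m h \<longleftrightarrow> h {} = 0 \<and> h {[]} = 1 \<and>
     (\<forall>L M. reglang m L \<longrightarrow> reglang m M \<longrightarrow>
        h (L \<union> M) = h L + h M \<and> h (lconc L M) = h L * h M) \<and>
     (\<forall>A. regular_lang m A \<longrightarrow> h (\<Union>A) = sumR (h ` A))"

text \<open>R-morphism C'_m -> T, given by an R-morphism R Delta_m^* -> T constant on rho-classes.\<close>
definition Rmor_C :: "nat \<Rightarrow> (letter list set \<Rightarrow> 'b::rdioid) \<Rightarrow> bool" where
  "Rmor_C m h \<longleftrightarrow> Rmor_lang m h \<and> (\<forall>L M. (L, M) \<in> rho m \<longrightarrow> h L = h M)"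

datatype 'k rexp = RConst 'k | RPi | RP nat | RQ nat | RX
  | RPlus "'k rexp" "'k rexp" | RTimes "'k rexp" "'k rexp" | RStar "'k rexp"

fun wf_rexp :: "nat \<Rightarrow> 'k rexp \<Rightarrow> bool" where
  "wf_rexp m (RP i) = (1 \<le> i \<and> i < m)"
| "wf_rexp m (RQ i) = (1 \<le> i \<and> i < m)"
| "wf_rexp m (RPlus a b) = (wf_rexp m a \<and> wf_rexp m b)"
| "wf_rexp m (RTimes a b) = (wf_rexp m a \<and> wf_rexp m b)"
| "wf_rexp m (RStar a) = wf_rexp m a"
| "wf_rexp m _ = True"

text \<open>Value in T (K via f, C'_m via h) with x := c.\<close>
fun eval_rexp :: "('k \<Rightarrow> 'b::rdioid) \<Rightarrow> (letter list set \<Rightarrow> 'b) \<Rightarrow> 'b \<Rightarrow> 'k rexp \<Rightarrow> 'b" where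
  "eval_rexp f h c (RConst k) = f k"
| "eval_rexp f h c RPi = h {[Lq 0, Lp 0]}"
| "eval_rexp f h c (RP i) = h {[Lp i]}"
| "eval_rexp f h c (RQ i) = h {[Lq i]}"
| "eval_rexp f h c RX = c"
| "eval_rexp f h c (RPlus a b) = eval_rexp f h c a + eval_rexp f h c b"
| "eval_rexp f h c (RTimes a b) = eval_rexp f h c a * eval_rexp f h c b"
| "eval_rexp f h c (RStar a) = kstar (eval_rexp f h c a)"

end

theory Submission
  imports Defs
begin

lemma sumR_single: "sumR {u::'a::dioid} = u"
  unfolding sumR_def
proof (rule the_equality)
  show "is_lubD {u} u" by (auto simp: is_lubD_def dle_def add_idem)
next
  fix s assume "is_lubD {u} s"
  then have "u + s = s" "s + u = u" by (auto simp: is_lubD_def dle_def add_idem)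
  then show "s = u" by (simp add: add.commute)
qed

lemma reg_single: "regular {u::'a::dioid}"
  by (rule ratsub.fin) auto

lemma setmul_right: "setmul (*) A {u} = (\<lambda>a. a*u) ` A"
  by (auto simp: setmul_def)

lemma setmul_left: "setmul (*) {u} A = (\<lambda>a. u*a) ` A"
  by (auto simp: setmul_def)

lemma regular_right: "regular (A::'a::dioid set) \<Longrightarrow> regular ((\<lambda>a. a*u) ` A)"
  using ratsub.prod[OF _ reg_single, of A u] by (simp add: setmul_right)

lemma sumR_right: "regular (A::'a::rdioid set) \<Longrightarrow> sumR A * u = sumR ((\<lambda>a. a*u) ` A)"
  using rdioid_sumR_mult[of A "{u}"] reg_single[of u] by (simp add: setmul_right sumR_single)

lemma sumR_left: "regular (A::'a::rdioid set) \<Longrightarrow> u * sumR A = sumR ((\<lambda>a. u*a) ` A)"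
  using rdioid_sumR_mult[of "{u}" A] reg_single[of u] by (simp add: setmul_left sumR_single)

lemma sumR_right_eq: "regular (A::'a::rdioid set) \<Longrightarrow> \<forall>a\<in>A. a*u = a*v \<Longrightarrow> sumR A * u = sumR A * v"
proof -
  assume r: "regular A" and e: "\<forall>a\<in>A. a*u = a*v"
  have "(\<lambda>a. a*u) ` A = (\<lambda>a. a*v) ` A" using e by (auto intro!: image_cong)
  then show ?thesis using sumR_right[OF r, of u] sumR_right[OF r, of v] by simp
qed

lemma sumR_comm: "regular (A::'a::rdioid set) \<Longrightarrow> \<forall>a\<in>A. a*c = c*a \<Longrightarrow> sumR A * c = c * sumR A"
proof -
  assume r: "regular A" and e: "\<forall>a\<in>A. a*c = c*a"
  have "(\<lambda>a. a*c) ` A = (\<lambda>a. c*a) ` A" using e by (auto intro!: image_cong)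
  then show ?thesis using sumR_right[OF r, of c] sumR_left[OF r, of c] by simp
qed

lemma foldr_rep: "set xs \<subseteq> {a} \<Longrightarrow> foldr (*) xs (1::'a::monoid_mult) = a ^ length xs"
  by (induction xs) auto

lemma foldr_rep2: "foldr (*) (replicate n a) (1::'a::monoid_mult) = a ^ n"
  by (induction n) auto

lemma mstar_single: "mstar (*) 1 {a::'a::monoid_mult} = range (\<lambda>n. a^n)"
  unfolding mstar_def
proof (intro equalityI subsetI)
  fix x assume "x \<in> {foldr (*) xs 1 |xs. set xs \<subseteq> {a}}"
  then obtain xs where "x = foldr (*) xs 1" "set xs \<subseteq> {a}" by auto
  then show "x \<in> range (\<lambda>n. a^n)" using foldr_rep by auto
next
  fix x assume "x \<in> range (\<lambda>n. a^n)"
  then obtain n where "x = a^n" by auto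
  moreover have "foldr (*) (replicate n a) 1 = a^n" by (rule foldr_rep2)
  ultimately have "x = foldr (*) (replicate n a) 1" "set (replicate n a) \<subseteq> {a}"
    by auto
  then show "x \<in> {foldr (*) xs 1 |xs. set xs \<subseteq> {a}}" by blast
qed

lemma kstar_left: "y * kstar (a::'a::rdioid) = sumR (range (\<lambda>n. y * a^n))"
  and kstar_reg: "regular (range (\<lambda>n. y * a^n))"
proof -
  have r: "regular (mstar (*) 1 {a})" by (rule ratsub.star[OF reg_single])
  have eq: "(\<lambda>b. y*b) ` range (\<lambda>n. a^n) = range (\<lambda>n. y * a^n)" by auto
  show "y * kstar a = sumR (range (\<lambda>n. y * a^n))"
    unfolding kstar_def using sumR_left[OF r, of y] by (simp add: mstar_single eq)
  show "regular (range (\<lambda>n. y * a^n))"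
    using ratsub.prod[OF reg_single r, of y] by (simp add: setmul_left mstar_single eq)
qed

locale setting =
  fixes m :: nat and f :: "'k::rdioid \<Rightarrow> 'b::rdioid" and h :: "letter list set \<Rightarrow> 'b"
  assumes m2: "m \<ge> 2" and Rf: "Rmor f" and Rh: "Rmor_C m h"
    and comm: "\<forall>k L. reglang m L \<longrightarrow> f k * h L = h L * f k"
begin

abbreviation P where "P i \<equiv> h {[Lp i]}"
abbreviation Q where "Q i \<equiv> h {[Lq i]}"

lemma reg_p: "i < m \<Longrightarrow> reglang m {[Lp i]}"
  by (rule reglang.sing) (auto simp: Delta_def)
lemma reg_q: "i < m \<Longrightarrow> reglang m {[Lq i]}"
  by (rule reglang.sing) (auto simp: Delta_def)

lemma h_conc: "reglang m L \<Longrightarrow> reglang m M \<Longrightarrow> h (lconc L M) = h L * h M"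
  using Rh by (auto simp: Rmor_C_def Rmor_lang_def)
lemma h_un: "reglang m L \<Longrightarrow> reglang m M \<Longrightarrow> h (L \<union> M) = h L + h M"
  using Rh by (auto simp: Rmor_C_def Rmor_lang_def)
lemma h_empty: "h {} = 0" and h_eps: "h {[]} = 1"
  using Rh by (auto simp: Rmor_C_def Rmor_lang_def)

lemma PQ: "i < m \<Longrightarrow> j < m \<Longrightarrow> P i * Q j = (if i = j then 1 else 0)"
proof -
  assume i: "i < m" and j: "j < m"
  have c: "lconc {[Lp i]} {[Lq j]} = {[Lp i, Lq j]}" by (auto simp: setmul_def)
  have "({[Lp i, Lq j]}, if i = j then {[]} else {}) \<in> bracket_rels m"
    unfolding bracket_rels_def using i j by blast
  then have "({[Lp i, Lq j]}, if i = j then {[]} else {}) \<in> rho m"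
    unfolding rho_def by blast
  then have "h {[Lp i, Lq j]} = h (if i = j then {[]} else {})"
    using Rh by (auto simp: Rmor_C_def)
  then show ?thesis using h_conc[OF reg_p[OF i] reg_q[OF j]] c h_empty h_eps
    by (auto split: if_splits)
qed

lemma pi_eq: "h {[Lq 0, Lp 0]} = Q 0 * P 0"
proof -
  have c: "lconc {[Lq 0]} {[Lp 0]} = {[Lq 0, Lp 0]}" by (auto simp: setmul_def)
  have "0 < m" using m2 by simp
  then show ?thesis using h_conc[OF reg_q reg_p] c by metis
qed

definition E where "E n = {[Lq i, Lp i] | i. i < n}"

lemma E_prop: "n \<le> m \<Longrightarrow> reglang m (E n) \<and> h (E n) = (\<Sum>i<n. Q i * P i)"
proof (induction n)
  case 0
  have "E 0 = {}" by (simp add: E_def)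
  then show ?case using h_empty reglang.empty by simp
next
  case (Suc n)
  have c: "lconc {[Lq n]} {[Lp n]} = {[Lq n, Lp n]}" by (auto simp: setmul_def)
  have eq: "E (Suc n) = E n \<union> lconc {[Lq n]} {[Lp n]}"
    unfolding c E_def by (auto simp: less_Suc_eq)
  have n: "n < m" using Suc by simp
  have r1: "reglang m (E n)" and h1: "h (E n) = (\<Sum>i<n. Q i * P i)" using Suc by auto
  have r2: "reglang m (lconc {[Lq n]} {[Lp n]})" using reglang.conc[OF reg_q[OF n] reg_p[OF n]] .
  show ?case unfolding eq using reglang.un[OF r1 r2] h_un[OF r1 r2] h1 h_conc[OF reg_q[OF n] reg_p[OF n]]
    by simp
qed

abbreviation e where "e \<equiv> h (E m)"

lemma reg_E: "reglang m (E m)" using E_prop by simp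

lemma Pe: "j < m \<Longrightarrow> P j * e = P j"
proof -
  assume j: "j < m"
  have "P j * e = (\<Sum>i<m. P j * (Q i * P i))" using E_prop[of m] by (simp add: sum_distrib_left)
  also have "\<dots> = (\<Sum>i<m. (if j = i then P i else 0))"
    by (rule sum.cong) (auto simp: mult.assoc[symmetric] PQ j)
  also have "\<dots> = P j" using j by simp
  finally show ?thesis .
qed

definition Qw :: "nat list \<Rightarrow> 'b" where "Qw w = foldr (\<lambda>i a. Q i * a) w 1"

lemma Qw_simps[simp]: "Qw [] = 1" "Qw (i # w) = Q i * Qw w"
  by (auto simp: Qw_def)

lemma fk_Qw: "set w \<subseteq> {1..<m} \<Longrightarrow> f k * Qw w = Qw w * f k"
proof (induction w)
  case Nil then show ?case by simp
next
  case (Cons i w)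
  then have i: "i < m" and IH: "f k * Qw w = Qw w * f k" by auto
  have "f k * Q i = Q i * f k" using comm reg_q[OF i] by blast
  then show ?case using IH by (simp add: mult.assoc[symmetric]) (simp add: mult.assoc)
qed

lemma fk_e: "f k * e = e * f k" using comm reg_E by blast

definition Y where "Y = {y. \<forall>w. set w \<subseteq> {1..<m} \<longrightarrow> y * Qw w * e = y * Qw w}"

lemma Y_fk: "y \<in> Y \<Longrightarrow> y * f k \<in> Y"
  unfolding Y_def
proof (safe)
  fix w assume y: "\<forall>w. set w \<subseteq> {1..<m} \<longrightarrow> y * Qw w * e = y * Qw w" and w: "set w \<subseteq> {1..<m}"
  have "y * f k * Qw w * e = y * (f k * Qw w) * e" by (simp add: mult.assoc)
  also have "\<dots> = y * Qw w * (f k * e)" by (simp add: fk_Qw[OF w] mult.assoc)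
  also have "\<dots> = y * Qw w * e * f k" by (simp add: fk_e mult.assoc)
  also have "\<dots> = y * Qw w * f k" using y w by simp
  also have "\<dots> = y * (f k * Qw w)" by (simp add: mult.assoc fk_Qw[OF w])
  also have "\<dots> = y * f k * Qw w" by (simp add: mult.assoc)
  finally show "y * f k * Qw w * e = y * f k * Qw w" .
qed

lemma Y_P: "y \<in> Y \<Longrightarrow> 1 \<le> i \<Longrightarrow> i < m \<Longrightarrow> y * P i \<in> Y"
  unfolding Y_def
proof (safe)
  fix w assume y: "\<forall>w. set w \<subseteq> {1..<m} \<longrightarrow> y * Qw w * e = y * Qw w" and w: "set w \<subseteq> {1..<m}"
    and i: "1 \<le> i" "i < m"
  show "y * P i * Qw w * e = y * P i * Qw w"
  proof (cases w)
    case Nil then show ?thesis using Pe[OF i(2)] by (simp add: mult.assoc)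
  next
    case (Cons j w')
    then have j: "j < m" and w': "set w' \<subseteq> {1..<m}" using w by auto
    have "y * P i * Qw w = y * (P i * Q j) * Qw w'" using Cons by (simp add: mult.assoc)
    then have "y * P i * Qw w = (if i = j then y * Qw w' else 0)"
      using PQ[OF i(2) j] by simp
    then show ?thesis using y w' by simp
  qed
qed

lemma Y_Q: "y \<in> Y \<Longrightarrow> 1 \<le> i \<Longrightarrow> i < m \<Longrightarrow> y * Q i \<in> Y"
  unfolding Y_def
proof (safe)
  fix w assume y: "\<forall>w. set w \<subseteq> {1..<m} \<longrightarrow> y * Qw w * e = y * Qw w" and w: "set w \<subseteq> {1..<m}"
    and i: "1 \<le> i" "i < m"
  have "set (i # w) \<subseteq> {1..<m}" using w i by auto
  then have "y * Qw (i # w) * e = y * Qw (i # w)" using y by blast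
  then show "y * Q i * Qw w * e = y * Q i * Qw w" by (simp add: mult.assoc)
qed

lemma Y_pi: "y \<in> Y \<Longrightarrow> y * (Q 0 * P 0) \<in> Y"
  unfolding Y_def
proof (safe)
  fix w assume y: "\<forall>w. set w \<subseteq> {1..<m} \<longrightarrow> y * Qw w * e = y * Qw w" and w: "set w \<subseteq> {1..<m}"
  have m0: "0 < m" using m2 by simp
  show "y * (Q 0 * P 0) * Qw w * e = y * (Q 0 * P 0) * Qw w"
  proof (cases w)
    case Nil then show ?thesis using Pe[OF m0] by (simp add: mult.assoc)
  next
    case (Cons j w')
    then have j: "j < m" "j \<noteq> 0" using w by auto
    have "y * (Q 0 * P 0) * Qw w = y * Q 0 * (P 0 * Q j) * Qw w'" using Cons by (simp add: mult.assoc)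
    then have "y * (Q 0 * P 0) * Qw w = 0"
      using PQ[OF m0 j(1)] j by simp
    then show ?thesis by simp
  qed
qed

lemma Y_plus: "y \<in> Y \<Longrightarrow> z \<in> Y \<Longrightarrow> y + z \<in> Y"
  unfolding Y_def by (simp add: distrib_right)

lemma Y_sumR: "regular A \<Longrightarrow> A \<subseteq> Y \<Longrightarrow> sumR A \<in> Y"
  unfolding Y_def
proof (safe)
  fix w assume r: "regular A" and AY: "A \<subseteq> {y. \<forall>w. set w \<subseteq> {1..<m} \<longrightarrow> y * Qw w * e = y * Qw w}"
    and w: "set w \<subseteq> {1..<m}"
  have "\<forall>a\<in>A. a * (Qw w * e) = a * Qw w" using AY w by (auto simp: mult.assoc)
  from sumR_right_eq[OF r this] show "sumR A * Qw w * e = sumR A * Qw w" by (simp add: mult.assoc)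
qed

abbreviation ev where "ev c \<equiv> eval_rexp f h c"

lemma pow_Y: "y \<in> Y \<Longrightarrow> (\<And>y. y \<in> Y \<Longrightarrow> y * a = y * b \<and> y * b \<in> Y) \<Longrightarrow> y * a^n = y * b^n \<and> y * b^n \<in> Y"
proof (induction n)
  case 0 then show ?case by simp
next
  case (Suc n)
  then have "y * a^n = y * b^n" "y * b^n \<in> Y" by auto
  moreover have "y * a^Suc n = (y * a^n) * a" "y * b^Suc n = (y * b^n) * b"
    by (simp_all only: power_Suc2 mult.assoc)
  ultimately show ?case using Suc.prems(2)[of "y * b^n"] by simp
qed

lemma lemA: "wf_rexp m \<phi> \<Longrightarrow> y \<in> Y \<Longrightarrow> y * ev e \<phi> = y * ev 1 \<phi> \<and> y * ev 1 \<phi> \<in> Y"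
proof (induction \<phi> arbitrary: y)
  case (RConst k) then show ?case using Y_fk by simp
next
  case RPi then show ?case using Y_pi by (simp add: pi_eq)
next
  case (RP i) then show ?case using Y_P by simp
next
  case (RQ i) then show ?case using Y_Q by simp
next
  case RX
  moreover have "set ([]::nat list) \<subseteq> {1..<m}" by simp
  ultimately have "y * Qw [] * e = y * Qw []" unfolding Y_def by blast
  then show ?case using RX by simp
next
  case (RPlus a b) then show ?case using Y_plus by (simp add: distrib_left)
next
  case (RTimes a b)
  then have "y * ev e a = y * ev 1 a" "y * ev 1 a \<in> Y" by auto
  then show ?case using RTimes.IH(2)[of "y * ev 1 a"] RTimes.prems by (simp add: mult.assoc[symmetric])
next
  case (RStar a)
  have "\<And>y. y \<in> Y \<Longrightarrow> y * ev e a = y * ev 1 a \<and> y * ev 1 a \<in> Y" using RStar by simp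
  then have pw: "\<And>n. y * (ev e a)^n = y * (ev 1 a)^n \<and> y * (ev 1 a)^n \<in> Y"
    using pow_Y RStar.prems(2) by blast
  then have eq: "range (\<lambda>n. y * (ev e a)^n) = range (\<lambda>n. y * (ev 1 a)^n)" by simp
  have "sumR (range (\<lambda>n. y * (ev 1 a)^n)) \<in> Y"
    using Y_sumR[OF kstar_reg] pw by blast
  then show ?case by (simp add: kstar_left eq)
qed

definition Cent where "Cent = {c. \<forall>L. reglang m L \<longrightarrow> c * h L = h L * c}"

lemma Cent_mult: "c \<in> Cent \<Longrightarrow> d \<in> Cent \<Longrightarrow> c * d \<in> Cent"
  unfolding Cent_def by (auto simp: mult.assoc) (metis mult.assoc)
lemma Cent_plus: "c \<in> Cent \<Longrightarrow> d \<in> Cent \<Longrightarrow> c + d \<in> Cent"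
  unfolding Cent_def by (auto simp: distrib_left distrib_right)
lemma Cent_0: "0 \<in> Cent" and Cent_1: "1 \<in> Cent" unfolding Cent_def by auto
lemma Cent_fk: "f k \<in> Cent" unfolding Cent_def using comm by auto
lemma Cent_sumR: "regular A \<Longrightarrow> A \<subseteq> Cent \<Longrightarrow> sumR A \<in> Cent"
  unfolding Cent_def using sumR_comm by blast

definition Y2 where "Y2 = {y. \<forall>w. set w \<subseteq> {1..<m} \<longrightarrow> y * Qw w * Q 0 \<in> Cent}"

lemma Y2_fk: "y \<in> Y2 \<Longrightarrow> y * f k \<in> Y2"
  unfolding Y2_def
proof (safe)
  fix w assume y: "\<forall>w. set w \<subseteq> {1..<m} \<longrightarrow> y * Qw w * Q 0 \<in> Cent" and w: "set w \<subseteq> {1..<m}"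
  have m0: "0 < m" using m2 by simp
  have q0: "f k * Q 0 = Q 0 * f k" using comm reg_q[OF m0] by blast
  have "y * f k * Qw w * Q 0 = y * (f k * Qw w) * Q 0" by (simp add: mult.assoc)
  also have "\<dots> = y * Qw w * (f k * Q 0)" by (simp add: fk_Qw[OF w] mult.assoc)
  also have "\<dots> = y * Qw w * Q 0 * f k" by (simp add: q0 mult.assoc)
  finally have "y * f k * Qw w * Q 0 = y * Qw w * Q 0 * f k" .
  then show "y * f k * Qw w * Q 0 \<in> Cent" using y w Cent_mult Cent_fk by simp
qed

lemma Y2_P: "y \<in> Y2 \<Longrightarrow> 1 \<le> i \<Longrightarrow> i < m \<Longrightarrow> y * P i \<in> Y2"
  unfolding Y2_def
proof (safe)
  fix w assume y: "\<forall>w. set w \<subseteq> {1..<m} \<longrightarrow> y * Qw w * Q 0 \<in> Cent" and w: "set w \<subseteq> {1..<m}"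
    and i: "1 \<le> i" "i < m"
  have m0: "0 < m" using m2 by simp
  show "y * P i * Qw w * Q 0 \<in> Cent"
  proof (cases w)
    case Nil then show ?thesis using PQ[OF i(2) m0] i Cent_0 by (simp add: mult.assoc)
  next
    case (Cons j w')
    then have j: "j < m" and w': "set w' \<subseteq> {1..<m}" using w by auto
    have "y * P i * Qw w = y * (P i * Q j) * Qw w'" using Cons by (simp add: mult.assoc)
    then have "y * P i * Qw w = (if i = j then y * Qw w' else 0)"
      using PQ[OF i(2) j] by simp
    then show ?thesis using y w' Cent_0 by simp
  qed
qed

lemma Y2_Q: "y \<in> Y2 \<Longrightarrow> 1 \<le> i \<Longrightarrow> i < m \<Longrightarrow> y * Q i \<in> Y2"
  unfolding Y2_def
proof (safe)
  fix w assume y: "\<forall>w. set w \<subseteq> {1..<m} \<longrightarrow> y * Qw w * Q 0 \<in> Cent" and w: "set w \<subseteq> {1..<m}"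
    and i: "1 \<le> i" "i < m"
  have "set (i # w) \<subseteq> {1..<m}" using w i by auto
  then have "y * Qw (i # w) * Q 0 \<in> Cent" using y by blast
  then show "y * Q i * Qw w * Q 0 \<in> Cent" by (simp add: mult.assoc)
qed

lemma Y2_pi: "y \<in> Y2 \<Longrightarrow> y * (Q 0 * P 0) \<in> Y2"
  unfolding Y2_def
proof (safe)
  fix w assume y: "\<forall>w. set w \<subseteq> {1..<m} \<longrightarrow> y * Qw w * Q 0 \<in> Cent" and w: "set w \<subseteq> {1..<m}"
  have m0: "0 < m" using m2 by simp
  show "y * (Q 0 * P 0) * Qw w * Q 0 \<in> Cent"
  proof (cases w)
    case Nil
    have "set ([]::nat list) \<subseteq> {1..<m}" by simp
    then have "y * Qw [] * Q 0 \<in> Cent" using y by blast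
    moreover have "y * (Q 0 * P 0) * Qw w * Q 0 = y * Q 0 * (P 0 * Q 0)" using Nil by (simp add: mult.assoc)
    ultimately show ?thesis using PQ[OF m0 m0] by simp
  next
    case (Cons j w')
    then have j: "j < m" "j \<noteq> 0" using w by auto
    have "y * (Q 0 * P 0) * Qw w = y * Q 0 * (P 0 * Q j) * Qw w'" using Cons by (simp add: mult.assoc)
    then have "y * (Q 0 * P 0) * Qw w = 0"
      using PQ[OF m0 j(1)] j by simp
    then show ?thesis using Cent_0 by simp
  qed
qed

lemma Y2_plus: "y \<in> Y2 \<Longrightarrow> z \<in> Y2 \<Longrightarrow> y + z \<in> Y2"
  unfolding Y2_def by (simp add: distrib_right Cent_plus)

lemma Y2_sumR: "regular A \<Longrightarrow> A \<subseteq> Y2 \<Longrightarrow> sumR A \<in> Y2"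
  unfolding Y2_def
proof (safe)
  fix w assume r: "regular A" and AY: "A \<subseteq> {y. \<forall>w. set w \<subseteq> {1..<m} \<longrightarrow> y * Qw w * Q 0 \<in> Cent}"
    and w: "set w \<subseteq> {1..<m}"
  have "(\<lambda>a. a * (Qw w * Q 0)) ` A \<subseteq> Cent" using AY w by (auto simp: mult.assoc)
  from Cent_sumR[OF regular_right[OF r] this] sumR_right[OF r, of "Qw w * Q 0"]
  show "sumR A * Qw w * Q 0 \<in> Cent" by (simp add: mult.assoc)
qed

lemma pow_Y2: "y \<in> Y2 \<Longrightarrow> (\<And>y. y \<in> Y2 \<Longrightarrow> y * b \<in> Y2) \<Longrightarrow> y * b^n \<in> Y2"
proof (induction n)
  case 0 then show ?case by simp
next
  case (Suc n)
  then have "y * b^n \<in> Y2" by auto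
  moreover have "y * b^Suc n = (y * b^n) * b"
    by (simp_all only: power_Suc2 mult.assoc)
  ultimately show ?case using Suc.prems(2)[of "y * b^n"] by simp
qed

lemma lemB: "wf_rexp m \<phi> \<Longrightarrow> y \<in> Y2 \<Longrightarrow> y * ev 1 \<phi> \<in> Y2"
proof (induction \<phi> arbitrary: y)
  case (RConst k) then show ?case using Y2_fk by simp
next
  case RPi then show ?case using Y2_pi by (simp add: pi_eq)
next
  case (RP i) then show ?case using Y2_P by simp
next
  case (RQ i) then show ?case using Y2_Q by simp
next
  case RX then show ?case by simp
next
  case (RPlus a b) then show ?case using Y2_plus by (simp add: distrib_left)
next
  case (RTimes a b)
  then have "y * ev 1 a \<in> Y2" by auto
  then show ?case using RTimes.IH(2)[of "y * ev 1 a"] RTimes.prems by (simp add: mult.assoc[symmetric])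
next
  case (RStar a)
  have "\<And>y. y \<in> Y2 \<Longrightarrow> y * ev 1 a \<in> Y2" using RStar by simp
  then have pw: "\<And>n. y * (ev 1 a)^n \<in> Y2"
    using pow_Y2 RStar.prems(2) by blast
  have "sumR (range (\<lambda>n. y * (ev 1 a)^n)) \<in> Y2"
    using Y2_sumR[OF kstar_reg] pw by blast
  then show ?case by (simp add: kstar_left)
qed

lemma P0_Y: "P 0 \<in> Y"
  unfolding Y_def
proof (safe)
  fix w assume w: "set w \<subseteq> {1..<m}"
  have m0: "0 < m" using m2 by simp
  show "P 0 * Qw w * e = P 0 * Qw w"
  proof (cases w)
    case Nil then show ?thesis using Pe[OF m0] by simp
  next
    case (Cons j w')
    then have j: "j < m" "j \<noteq> 0" using w by auto
    have "P 0 * Qw w = (P 0 * Q j) * Qw w'" using Cons by (simp add: mult.assoc)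
    then have "P 0 * Qw w = 0" using PQ[OF m0 j(1)] j by simp
    then show ?thesis by simp
  qed
qed

lemma P0_Y2: "P 0 \<in> Y2"
  unfolding Y2_def
proof (safe)
  fix w assume w: "set w \<subseteq> {1..<m}"
  have m0: "0 < m" using m2 by simp
  show "P 0 * Qw w * Q 0 \<in> Cent"
  proof (cases w)
    case Nil then show ?thesis using PQ[OF m0 m0] Cent_1 by simp
  next
    case (Cons j w')
    then have j: "j < m" "j \<noteq> 0" using w by auto
    have "P 0 * Qw w = (P 0 * Q j) * Qw w'" using Cons by (simp add: mult.assoc)
    then have "P 0 * Qw w = 0" using PQ[OF m0 j(1)] j by simp
    then show ?thesis using Cent_0 by simp
  qed
qed

lemma main:
  assumes "wf_rexp m \<phi>"
  shows "P 0 * ev (h {[Lq i, Lp i] | i. i < m}) \<phi> * Q 0 = P 0 * ev 1 \<phi> * Q 0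
     \<and> (\<forall>L. reglang m L \<longrightarrow> (P 0 * ev 1 \<phi> * Q 0) * h L = h L * (P 0 * ev 1 \<phi> * Q 0))"
proof
  have "P 0 * ev e \<phi> = P 0 * ev 1 \<phi>" using lemA[OF assms P0_Y] by simp
  then show "P 0 * ev (h {[Lq i, Lp i] | i. i < m}) \<phi> * Q 0 = P 0 * ev 1 \<phi> * Q 0"
    by (simp add: E_def)
next
  have "P 0 * ev 1 \<phi> \<in> Y2" using lemB[OF assms P0_Y2] .
  moreover have "set ([]::nat list) \<subseteq> {1..<m}" by simp
  ultimately have "P 0 * ev 1 \<phi> * Qw [] * Q 0 \<in> Cent" unfolding Y2_def by blast
  then show "\<forall>L. reglang m L \<longrightarrow> (P 0 * ev 1 \<phi> * Q 0) * h L = h L * (P 0 * ev 1 \<phi> * Q 0)"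
    by (simp add: Cent_def)
qed

end

theorem theorem12:
  fixes m :: nat
    and f :: "'k::rdioid \<Rightarrow> 'b::rdioid"
    and h :: "letter list set \<Rightarrow> 'b"
    and \<phi> :: "'k rexp"
  assumes "m \<ge> 2"
    and "Rmor f"
    and "Rmor_C m h"
    and "\<forall>k L. reglang m L \<longrightarrow> f k * h L = h L * f k"
    and "wf_rexp m \<phi>"
  shows "h {[Lp 0]} * eval_rexp f h (h {[Lq i, Lp i] | i. i < m}) \<phi> * h {[Lq 0]}
           = h {[Lp 0]} * eval_rexp f h 1 \<phi> * h {[Lq 0]}
         \<and> (\<forall>L. reglang m L \<longrightarrow>
              (h {[Lp 0]} * eval_rexp f h 1 \<phi> * h {[Lq 0]}) * h L
              = h L * (h {[Lp 0]} * eval_rexp f h 1 \<phi> * h {[Lq 0]}))"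
proof -
  interpret setting m f h using assms(1-4) by unfold_locales
  show ?thesis using main[OF assms(5)] .
qed

end
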